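(* For every metric space $(X,d_X)$, every $q\in[1,\infty)$ and every $m,n\in\mathbb{N}$, $$\mathcal{C}^{\{-1,0,1\}}_{q,m,n}(X,d_X)\le 6^{1/q}\max_{k\in\{1,\dots,n\}}\mathcal{C}^{\{-1,1\}}_{q,m,k}(X,d_X)\qquad\text{and}\qquad \mathcal{C}^{\{-1,1\}}_{q,2m,n}(X,d_X)\le 2\,\mathcal{C}^{\{-1,0,1\}}_{q,m,n}(X,d_X).$$
   Context: $\mathbb{Z}_{2m}=\mathbb{Z}/2m\mathbb{Z}$, arithmetic mod $2m$, $e_i$ the standard basis. $\mathcal{C}^{\{-1,0,1\}}_{q,m,n}(X,d_X)$ is the infimum of $\mathcal{C}>0$ such that every $f:\mathbb{Z}_{2m}^n\to X$ satisfies $\big(\sum_{i=1}^n\sum_{x\in\mathbb{Z}_{2m}^n}d_X(f(x+me_i),f(x))^q\big)^{1/q}\le\mathcal{C}m\big(3^{-n}\sum_{\varepsilon\in\{-1,0,1\}^n}\sum_{x\in\mathbb{Z}_{2m}^n}d_X(f(x+\varepsilon),f(x))^q\big)^{1/q}$. $\mathcal{C}^{\{-1,1\}}_{q,m,n}(X,d_X)$ is the infimum of $\mathcal{C}_*>0$ such that every $f:\mathbb{Z}_{2m}^n\to X$ satisfies the same inequality with the right-hand average replaced by $2^{-n}\sum_{\varepsilon\in\{-1,1\}^n}\sum_{x\in\mathbb{Z}_{2m}^n}d_X(f(x+\varepsilon),f(x))^q$ and $\mathcal{C}$ by $\mathcal{C}_*$. *)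

theory Defs
  imports "HOL-Analysis.Analysis"
begin

text \<open>Points of Z_{2m}^n are represented as functions nat => int whose values at
  indices i < n lie in {0..<2m} and which vanish at indices i >= n.\<close>

definition grid :: "nat \<Rightarrow> nat \<Rightarrow> (nat \<Rightarrow> int) set" where
  "grid m n = {x. (\<forall>i<n. 0 \<le> x i \<and> x i < 2 * int m) \<and> (\<forall>i\<ge>n. x i = 0)}"

definition gadd :: "nat \<Rightarrow> nat \<Rightarrow> (nat \<Rightarrow> int) \<Rightarrow> (nat \<Rightarrow> int) \<Rightarrow> (nat \<Rightarrow> int)" where
  "gadd m n x y = (\<lambda>i. if i < n then (x i + y i) mod (2 * int m) else 0)"

definition cube :: "int set \<Rightarrow> nat \<Rightarrow> (nat \<Rightarrow> int) set" where
  "cube S n = {e. (\<forall>i<n. e i \<in> S) \<and> (\<forall>i\<ge>n. e i = 0)}"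

definition mei :: "nat \<Rightarrow> nat \<Rightarrow> (nat \<Rightarrow> int)" where
  "mei m i = (\<lambda>j. if j = i then int m else 0)"

definition lhs_sum :: "real \<Rightarrow> nat \<Rightarrow> nat \<Rightarrow> ((nat \<Rightarrow> int) \<Rightarrow> 'a::metric_space) \<Rightarrow> real" where
  "lhs_sum q m n f = (\<Sum>i<n. \<Sum>x\<in>grid m n. dist (f (gadd m n x (mei m i))) (f x) powr q)"

definition rhs_avg :: "int set \<Rightarrow> real \<Rightarrow> nat \<Rightarrow> nat \<Rightarrow> ((nat \<Rightarrow> int) \<Rightarrow> 'a::metric_space) \<Rightarrow> real" where
  "rhs_avg S q m n f = (1 / real (card S) ^ n) *
     (\<Sum>e\<in>cube S n. \<Sum>x\<in>grid m n. dist (f (gadd m n x e)) (f x) powr q)"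

text \<open>The constant C^S_{q,m,n}(X,d_X), as an extended real (infimum of the empty set = \<infinity>).\<close>
definition Cconst :: "int set \<Rightarrow> real \<Rightarrow> nat \<Rightarrow> nat \<Rightarrow> 'a::metric_space itself \<Rightarrow> ereal" where
  "Cconst S q m n X = Inf {ereal C | C. C > 0 \<and>
     (\<forall>f :: (nat \<Rightarrow> int) \<Rightarrow> 'a.
        lhs_sum q m n f powr (1/q) \<le> C * real m * rhs_avg S q m n f powr (1/q))}"

end

theory Submission
  imports Defs "HOL-Probability.Product_PMF"
begin

definition vadd :: "(nat \<Rightarrow> int) \<Rightarrow> (nat \<Rightarrow> int) \<Rightarrow> (nat \<Rightarrow> int)" where
  "vadd u v = (\<lambda>i. u i + v i)"

lemma gadd_assoc: "gadd m n (gadd m n x y) z = gadd m n x (vadd y z)"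
  unfolding gadd_def vadd_def
  by (rule ext) (simp add: mod_add_left_eq add.assoc)

lemma gadd_cong:
  assumes "\<And>i. i < n \<Longrightarrow> u i mod (2 * int m) = w i mod (2 * int m)"
  shows "gadd m n x u = gadd m n x w"
  unfolding gadd_def
proof (rule ext)
  fix i show "(if i < n then (x i + u i) mod (2 * int m) else 0) = (if i < n then (x i + w i) mod (2 * int m) else 0)"
  proof (cases "i < n")
    case True
    have "(x i + u i) mod (2 * int m) = (x i + u i mod (2 * int m)) mod (2 * int m)"
      by (simp add: mod_add_right_eq)
    also have "\<dots> = (x i + w i mod (2 * int m)) mod (2 * int m)" using assms[OF True] by simp
    also have "\<dots> = (x i + w i) mod (2 * int m)" by (simp add: mod_add_right_eq)
    finally show ?thesis using True by simp
  qed simp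
qed

lemma grid_PiE: "grid m n = PiE_dflt {..<n} 0 (\<lambda>_. {0..<2 * int m})"
  unfolding grid_def PiE_dflt_def
  by (rule set_eqI) (simp only: mem_Collect_eq lessThan_iff atLeastLessThan_iff not_less[symmetric], blast)

lemma cube_PiE: "cube S n = PiE_dflt {..<n} 0 (\<lambda>_. S)"
  unfolding cube_def PiE_dflt_def
  by (rule set_eqI) (simp only: mem_Collect_eq lessThan_iff not_less[symmetric], blast)

lemma finite_grid: "finite (grid m n)"
  unfolding grid_PiE by (intro finite_PiE_dflt finite_lessThan finite_atLeastLessThan_int)

lemma card_grid_pos: "m \<ge> 1 \<Longrightarrow> card (grid m n) > 0"
proof -
  assume m: "m \<ge> 1"
  have "card (grid m n) = (\<Prod>i\<in>{..<n}. card {0..<2 * int m})"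
    unfolding grid_PiE by (intro card_PiE_dflt finite_lessThan finite_atLeastLessThan_int)
  also have "\<dots> > 0" using m by (intro prod_pos) simp
  finally show ?thesis .
qed

lemma finite_cube: "finite S \<Longrightarrow> finite (cube S n)"
  unfolding cube_PiE by (intro finite_PiE_dflt finite_lessThan)

lemma gadd_in_grid: "m \<ge> 1 \<Longrightarrow> gadd m n x v \<in> grid m n"
proof -
  assume "m \<ge> 1"
  hence M: "0 < 2 * int m" by simp
  show ?thesis unfolding gadd_def grid_def
    using pos_mod_sign[OF M] pos_mod_bound[OF M] by simp
qed

lemma bij_translate:
  assumes "m \<ge> 1"
  shows "bij_betw (\<lambda>x. gadd m n x v) (grid m n) (grid m n)"
proof (rule bij_betw_byWitness[where f' = "\<lambda>x. gadd m n x (\<lambda>i. - v i)"])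
  show "\<forall>a\<in>grid m n. gadd m n (gadd m n a v) (\<lambda>i. - v i) = a"
  proof
    fix a assume a: "a \<in> grid m n"
    show "gadd m n (gadd m n a v) (\<lambda>i. - v i) = a"
      unfolding gadd_assoc
    proof (rule ext)
      fix i
      show "gadd m n a (vadd v (\<lambda>i. - v i)) i = a i"
        using a unfolding gadd_def vadd_def grid_def by simp
    qed
  qed
  show "\<forall>a\<in>grid m n. gadd m n (gadd m n a (\<lambda>i. - v i)) v = a"
  proof
    fix a assume a: "a \<in> grid m n"
    show "gadd m n (gadd m n a (\<lambda>i. - v i)) v = a"
      unfolding gadd_assoc
    proof (rule ext)
      fix i
      show "gadd m n a (vadd (\<lambda>i. - v i) v) i = a i"
        using a unfolding gadd_def vadd_def grid_def by simp
    qed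
  qed
qed (use gadd_in_grid assms in blast)+

lemma sum_translate:
  assumes "m \<ge> 1"
  shows "(\<Sum>x\<in>grid m n. F (gadd m n x v)) = (\<Sum>x\<in>grid m n. F x)"
  using sum.reindex_bij_betw[OF bij_translate[OF assms], of F] .

lemma powr_sum_le_pos:
  fixes a b q :: real
  assumes pos: "a > 0" "b > 0" and q: "q \<ge> 1"
  shows "(a + b) powr q \<le> 2 powr (q - 1) * (a powr q + b powr q)"
proof -
  have c: "((1 - 1/2) *\<^sub>R a + (1/2) *\<^sub>R b) powr q \<le> (1 - 1/2) * a powr q + (1/2) * b powr q"
    by (rule convex_onD[OF powr_convex[OF q]]) (use pos in auto)
  have e1: "(1 - 1/2) *\<^sub>R a + (1/2) *\<^sub>R b = (a + b) / 2" by simp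
  have e2: "(1 - 1/2) * a powr q + (1/2) * b powr q = (a powr q + b powr q) / 2" by simp
  have h: "((a + b)/2) powr q \<le> (a powr q + b powr q) / 2" using c unfolding e1 e2 .
  have e3: "((a + b)/2) powr q = (a + b) powr q / 2 powr q"
    using pos by (simp add: powr_divide)
  have e4: "(2::real) powr q = 2 * 2 powr (q - 1)"
    by (simp add: powr_diff)
  have "(a + b) powr q = 2 powr q * ((a + b)/2) powr q" unfolding e3 by simp
  also have "\<dots> \<le> 2 powr q * ((a powr q + b powr q) / 2)"
    by (rule mult_left_mono[OF h]) simp
  also have "\<dots> = 2 powr (q - 1) * (a powr q + b powr q)" unfolding e4 by simp
  finally show ?thesis .
qed

lemma powr_sum_le:
  fixes a b q :: real
  assumes "a \<ge> 0" "b \<ge> 0" "q \<ge> 1"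
  shows "(a + b) powr q \<le> 2 powr (q - 1) * (a powr q + b powr q)"
proof (cases "a = 0 \<or> b = 0")
  case True
  have one: "1 \<le> (2::real) powr (q - 1)" using assms by (simp add: ge_one_powr_ge_zero)
  have eq: "(a + b) powr q = a powr q + b powr q"
    using True by (elim disjE) simp_all
  have nn: "0 \<le> a powr q + b powr q" by simp
  show ?thesis unfolding eq using mult_right_mono[OF one nn] by simp
next
  case False
  with assms have pos: "a > 0" "b > 0" by auto
  show ?thesis by (rule powr_sum_le_pos[OF pos assms(3)])
qed

lemma dist_powr_tri:
  fixes a b c :: "'a::metric_space"
  assumes "q \<ge> 1"
  shows "dist a c powr q \<le> 2 powr (q - 1) * (dist a b powr q + dist b c powr q)"
proof -
  have "dist a c powr q \<le> (dist a b + dist b c) powr q"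
    by (rule powr_mono2) (use assms dist_triangle in auto)
  also have "\<dots> \<le> 2 powr (q - 1) * (dist a b powr q + dist b c powr q)"
    by (rule powr_sum_le) (use assms in auto)
  finally show ?thesis .
qed

definition hsum :: "((nat \<Rightarrow> int) \<Rightarrow> 'a::metric_space) \<Rightarrow> nat \<Rightarrow> nat \<Rightarrow> real \<Rightarrow> (nat \<Rightarrow> int) \<Rightarrow> real" where
  "hsum f m n q v = (\<Sum>x\<in>grid m n. dist (f (gadd m n x v)) (f x) powr q)"

lemma lhs_eq: "lhs_sum q m n f = (\<Sum>i<n. hsum f m n q (mei m i))"
  unfolding lhs_sum_def hsum_def ..

lemma rhs_eq: "rhs_avg S q m n f = (1 / real (card S) ^ n) * (\<Sum>e\<in>cube S n. hsum f m n q e)"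
  unfolding rhs_avg_def hsum_def ..

lemma hsum_nonneg: "hsum f m n q v \<ge> 0"
  unfolding hsum_def by (intro sum_nonneg) simp

lemma lhs_nonneg: "lhs_sum q m n f \<ge> 0"
  unfolding lhs_eq by (intro sum_nonneg hsum_nonneg)

lemma rhs_nonneg: "rhs_avg S q m n f \<ge> 0"
  unfolding rhs_eq by (intro mult_nonneg_nonneg sum_nonneg hsum_nonneg) simp

definition valid :: "int set \<Rightarrow> real \<Rightarrow> nat \<Rightarrow> nat \<Rightarrow> real \<Rightarrow> 'a::metric_space itself \<Rightarrow> bool" where
  "valid S q m n C X = (\<forall>f :: (nat \<Rightarrow> int) \<Rightarrow> 'a.
        lhs_sum q m n f powr (1/q) \<le> C * real m * rhs_avg S q m n f powr (1/q))"

lemma Cconst_valid: "Cconst S q m n X = Inf {ereal C | C. C > 0 \<and> valid S q m n C X}"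
  unfolding Cconst_def valid_def ..

lemma valid_pow:
  fixes f :: "(nat \<Rightarrow> int) \<Rightarrow> 'a::metric_space"
  assumes "valid S q m n C TYPE('a)" "q \<ge> 1" "C > 0"
  shows "lhs_sum q m n f \<le> (C * real m) powr q * rhs_avg S q m n f"
proof -
  let ?L = "lhs_sum q m n f" and ?R = "rhs_avg S q m n f"
  have L0: "?L \<ge> 0" by (rule lhs_nonneg)
  have R0: "?R \<ge> 0" by (rule rhs_nonneg)
  have Cm0: "C * real m \<ge> 0" using assms(3) by simp
  have q0: "q \<noteq> 0" using assms(2) by simp
  have h: "?L powr (1/q) \<le> C * real m * ?R powr (1/q)"
    using assms(1) unfolding valid_def by blast
  have "?L = (?L powr (1/q)) powr q"
    using L0 q0 by (simp add: powr_powr)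
  also have "\<dots> \<le> (C * real m * ?R powr (1/q)) powr q"
    by (rule powr_mono2) (use assms(2) h Cm0 in simp_all)
  also have "\<dots> = (C * real m) powr q * (?R powr (1/q)) powr q"
    using Cm0 by (simp add: powr_mult)
  also have "(?R powr (1/q)) powr q = ?R"
    using R0 q0 by (simp add: powr_powr)
  finally show ?thesis .
qed

lemma pow_valid:
  assumes "\<And>f :: (nat \<Rightarrow> int) \<Rightarrow> 'a::metric_space. lhs_sum q m n f \<le> K * rhs_avg S q m n f"
    and "q \<ge> 1" "C > 0" "K \<le> (C * real m) powr q"
  shows "valid S q m n C TYPE('a)"
  unfolding valid_def
proof
  fix f :: "(nat \<Rightarrow> int) \<Rightarrow> 'a"
  let ?L = "lhs_sum q m n f" and ?R = "rhs_avg S q m n f"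
  have L0: "?L \<ge> 0" by (rule lhs_nonneg)
  have R0: "?R \<ge> 0" by (rule rhs_nonneg)
  have Cm0: "C * real m \<ge> 0" using assms(3) by simp
  have q0: "q \<noteq> 0" using assms(2) by simp
  have "?L \<le> K * ?R" by (rule assms(1))
  also have "\<dots> \<le> (C * real m) powr q * ?R" by (rule mult_right_mono[OF assms(4) R0])
  finally have h: "?L \<le> (C * real m) powr q * ?R" .
  have "?L powr (1/q) \<le> ((C * real m) powr q * ?R) powr (1/q)"
    by (rule powr_mono2) (use assms(2) h L0 in simp_all)
  also have "\<dots> = ((C * real m) powr q) powr (1/q) * ?R powr (1/q)"
    using R0 by (simp add: powr_mult)
  also have "((C * real m) powr q) powr (1/q) = C * real m"
    using Cm0 q0 by (simp add: powr_powr)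
  finally show "?L powr (1/q) \<le> C * real m * ?R powr (1/q)" .
qed

lemma valid_mono:
  assumes "valid S q m n C TYPE('a::metric_space)" "C \<le> C'"
  shows "valid S q m n C' TYPE('a)"
  unfolding valid_def
proof
  fix f :: "(nat \<Rightarrow> int) \<Rightarrow> 'a"
  have "lhs_sum q m n f powr (1/q) \<le> C * real m * rhs_avg S q m n f powr (1/q)"
    using assms(1) unfolding valid_def by blast
  also have "\<dots> \<le> C' * real m * rhs_avg S q m n f powr (1/q)"
    by (intro mult_right_mono assms(2)) simp_all
  finally show "lhs_sum q m n f powr (1/q) \<le> C' * real m * rhs_avg S q m n f powr (1/q)" .
qed

lemma avg_embed:
  fixes f :: "(nat \<Rightarrow> int) \<Rightarrow> 'a::metric_space"
  assumes m': "m' \<ge> 1"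
    and hom: "\<And>x0 y. gadd m' n x0 (T (gadd m k y e)) = gadd m' n (gadd m' n x0 (T y)) (T e)"
  shows "(\<Sum>x0\<in>grid m' n. \<Sum>y\<in>grid m k.
            dist (f (gadd m' n x0 (T (gadd m k y e)))) (f (gadd m' n x0 (T y))) powr q)
         = real (card (grid m k)) * hsum f m' n q (T e)"
proof -
  let ?F = "\<lambda>z. dist (f (gadd m' n z (T e))) (f z) powr q"
  have "(\<Sum>x0\<in>grid m' n. \<Sum>y\<in>grid m k.
            dist (f (gadd m' n x0 (T (gadd m k y e)))) (f (gadd m' n x0 (T y))) powr q)
      = (\<Sum>x0\<in>grid m' n. \<Sum>y\<in>grid m k. ?F (gadd m' n x0 (T y)))"
    unfolding hom ..
  also have "\<dots> = (\<Sum>y\<in>grid m k. \<Sum>x0\<in>grid m' n. ?F (gadd m' n x0 (T y)))"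
    by (rule sum.swap)
  also have "\<dots> = (\<Sum>y\<in>grid m k. hsum f m' n q (T e))"
    unfolding hsum_def by (intro sum.cong refl sum_translate[OF m'])
  also have "\<dots> = real (card (grid m k)) * hsum f m' n q (T e)" by simp
  finally show ?thesis .
qed

lemma transfer:
  fixes f :: "(nat \<Rightarrow> int) \<Rightarrow> 'a::metric_space"
  assumes V: "valid S q m k C TYPE('a)" and q: "q \<ge> 1" and C: "C > 0"
    and m: "m \<ge> 1" and m': "m' \<ge> 1"
    and hom: "\<And>x0 y e. gadd m' n x0 (T (gadd m k y e)) = gadd m' n (gadd m' n x0 (T y)) (T e)"
  shows "(\<Sum>j<k. hsum f m' n q (T (mei m j)))
          \<le> (C * real m) powr q / real (card S) ^ k * (\<Sum>e\<in>cube S k. hsum f m' n q (T e))"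
proof -
  define g where "g x0 = (\<lambda>y. f (gadd m' n x0 (T y)))" for x0
  let ?K = "(C * real m) powr q"
  let ?N = "real (card (grid m k))"
  have N: "?N > 0" using card_grid_pos[OF m] by simp
  have "(\<Sum>x0\<in>grid m' n. lhs_sum q m k (g x0)) \<le> (\<Sum>x0\<in>grid m' n. ?K * rhs_avg S q m k (g x0))"
    by (intro sum_mono valid_pow[OF V q C])
  also have "(\<Sum>x0\<in>grid m' n. lhs_sum q m k (g x0)) = ?N * (\<Sum>j<k. hsum f m' n q (T (mei m j)))"
  proof -
    have "(\<Sum>x0\<in>grid m' n. lhs_sum q m k (g x0))
        = (\<Sum>x0\<in>grid m' n. \<Sum>j<k. \<Sum>y\<in>grid m k.
            dist (f (gadd m' n x0 (T (gadd m k y (mei m j))))) (f (gadd m' n x0 (T y))) powr q)"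
      unfolding lhs_sum_def g_def ..
    also have "\<dots> = (\<Sum>j<k. \<Sum>x0\<in>grid m' n. \<Sum>y\<in>grid m k.
            dist (f (gadd m' n x0 (T (gadd m k y (mei m j))))) (f (gadd m' n x0 (T y))) powr q)"
      by (rule sum.swap)
    also have "\<dots> = (\<Sum>j<k. ?N * hsum f m' n q (T (mei m j)))"
      by (intro sum.cong refl avg_embed[OF m'] hom)
    also have "\<dots> = ?N * (\<Sum>j<k. hsum f m' n q (T (mei m j)))"
      by (simp add: sum_distrib_left)
    finally show ?thesis .
  qed
  also have "(\<Sum>x0\<in>grid m' n. ?K * rhs_avg S q m k (g x0))
      = ?K / real (card S) ^ k * (?N * (\<Sum>e\<in>cube S k. hsum f m' n q (T e)))"
  proof -
    have "(\<Sum>x0\<in>grid m' n. ?K * rhs_avg S q m k (g x0))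
        = ?K / real (card S) ^ k * (\<Sum>x0\<in>grid m' n. \<Sum>e\<in>cube S k. \<Sum>y\<in>grid m k.
            dist (f (gadd m' n x0 (T (gadd m k y e)))) (f (gadd m' n x0 (T y))) powr q)"
      unfolding rhs_avg_def g_def by (simp add: sum_distrib_left)
    also have "(\<Sum>x0\<in>grid m' n. \<Sum>e\<in>cube S k. \<Sum>y\<in>grid m k.
            dist (f (gadd m' n x0 (T (gadd m k y e)))) (f (gadd m' n x0 (T y))) powr q)
        = (\<Sum>e\<in>cube S k. \<Sum>x0\<in>grid m' n. \<Sum>y\<in>grid m k.
            dist (f (gadd m' n x0 (T (gadd m k y e)))) (f (gadd m' n x0 (T y))) powr q)"
      by (rule sum.swap)
    also have "\<dots> = (\<Sum>e\<in>cube S k. ?N * hsum f m' n q (T e))"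
      by (intro sum.cong refl avg_embed[OF m'] hom)
    also have "\<dots> = ?N * (\<Sum>e\<in>cube S k. hsum f m' n q (T e))"
      by (simp add: sum_distrib_left)
    finally show ?thesis by simp
  qed
  finally have "?N * (\<Sum>j<k. hsum f m' n q (T (mei m j)))
      \<le> ?N * (?K / real (card S) ^ k * (\<Sum>e\<in>cube S k. hsum f m' n q (T e)))"
    by (simp add: algebra_simps)
  thus ?thesis using N by (simp only: mult_le_cancel_left_pos)
qed

abbreviation EA :: "nat set \<Rightarrow> (nat \<Rightarrow> int) set" where
  "EA A \<equiv> PiE_dflt A 0 (\<lambda>_. {-1,1})"

lemma card_pm1: "card {-1, 1::int} = 2" by simp

lemma slice:
  fixes f :: "(nat \<Rightarrow> int) \<Rightarrow> 'a::metric_space"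
  assumes V: "\<forall>k\<in>{1..n}. valid {-1,1} q m k C TYPE('a)"
    and q: "q \<ge> 1" and C: "C > 0" and m: "m \<ge> 1" and A: "A \<subseteq> {..<n}"
  shows "2 ^ card A * (\<Sum>i\<in>A. hsum f m n q (mei m i))
          \<le> (C * real m) powr q * (\<Sum>e\<in>EA A. hsum f m n q e)"
proof (cases "A = {}")
  case True
  then show ?thesis by (simp add: hsum_nonneg sum_nonneg)
next
  case False
  have finA: "finite A" using A finite_subset by blast
  define k where "k = card A"
  have k1: "k \<ge> 1" using False finA unfolding k_def by (simp add: Suc_le_eq card_gt_0_iff)
  have kn: "k \<le> n" unfolding k_def using card_mono[OF _ A] by simp
  have Vk: "valid {-1,1} q m k C TYPE('a)" using V k1 kn by simp
  obtain \<iota> where bij0: "bij_betw \<iota> {0..<k} A"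
    using ex_bij_betw_nat_finite[OF finA] unfolding k_def by blast
  have bij: "bij_betw \<iota> {..<k} A" using bij0 by (simp add: lessThan_atLeast0)
  have inj: "inj_on \<iota> {..<k}" using bij by (simp add: bij_betw_def)
  have img: "\<iota> ` {..<k} = A" using bij by (simp add: bij_betw_def)
  define \<kappa> where "\<kappa> = the_inv_into {..<k} \<iota>"
  have \<kappa>\<iota>: "\<kappa> (\<iota> j) = j" if "j < k" for j
    unfolding \<kappa>_def using the_inv_into_f_f[OF inj] that by simp
  have \<iota>A: "\<iota> j \<in> A" if "j < k" for j using img that by blast
  have \<kappa>k: "\<kappa> i < k" if "i \<in> A" for i
    unfolding \<kappa>_def using the_inv_into_into[OF inj, of i "{..<k}"] that img by simp
  have \<iota>\<kappa>: "\<iota> (\<kappa> i) = i" if "i \<in> A" for i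
    unfolding \<kappa>_def using f_the_inv_into_f[OF inj, of i] that img by simp
  define P where "P y = (\<lambda>i. if i \<in> A then y (\<kappa> i) else 0)" for y :: "nat \<Rightarrow> int"
  have hom: "gadd m n x0 (P (gadd m k y e)) = gadd m n (gadd m n x0 (P y)) (P e)" for x0 y e
    unfolding gadd_assoc
  proof (rule gadd_cong)
    fix i assume "i < n"
    show "P (gadd m k y e) i mod (2 * int m) = vadd (P y) (P e) i mod (2 * int m)"
    proof (cases "i \<in> A")
      case True
      then show ?thesis unfolding P_def vadd_def gadd_def using \<kappa>k[OF True] by simp
    next
      case False
      then show ?thesis unfolding P_def vadd_def by simp
    qed
  qed
  have tr: "(\<Sum>j<k. hsum f m n q (P (mei m j)))
          \<le> (C * real m) powr q / real (card {-1,1::int}) ^ k * (\<Sum>e\<in>cube {-1,1} k. hsum f m n q (P e))"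
    by (rule transfer[where T = P and m' = m, OF Vk q C m m hom])
  have Pmei: "P (mei m j) = mei m (\<iota> j)" if "j < k" for j
  proof (rule ext)
    fix i show "P (mei m j) i = mei m (\<iota> j) i"
    proof (cases "i \<in> A")
      case True
      have "(\<kappa> i = j) = (i = \<iota> j)" using \<kappa>\<iota>[OF that] \<iota>\<kappa>[OF True] by metis
      then show ?thesis unfolding P_def mei_def using True by simp
    next
      case False
      then have "i \<noteq> \<iota> j" using \<iota>A[OF that] by blast
      then show ?thesis unfolding P_def mei_def using False by simp
    qed
  qed
  have s1: "(\<Sum>j<k. hsum f m n q (P (mei m j))) = (\<Sum>i\<in>A. hsum f m n q (mei m i))"
  proof -
    have "(\<Sum>j<k. hsum f m n q (P (mei m j))) = (\<Sum>j<k. hsum f m n q (mei m (\<iota> j)))"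
      by (intro sum.cong refl) (simp add: Pmei)
    also have "\<dots> = (\<Sum>i\<in>A. hsum f m n q (mei m i))"
      by (rule sum.reindex_bij_betw[OF bij])
    finally show ?thesis .
  qed
  define Q where "Q e = (\<lambda>j. if j < k then e (\<iota> j) else 0)" for e :: "nat \<Rightarrow> int"
  have bijP: "bij_betw P (cube {-1,1} k) (EA A)"
  proof (rule bij_betw_byWitness[where f' = Q])
    show "\<forall>e\<in>cube {-1,1} k. Q (P e) = e"
    proof
      fix e assume e: "e \<in> cube {-1,1} k"
      show "Q (P e) = e"
      proof (rule ext)
        fix j show "Q (P e) j = e j"
        proof (cases "j < k")
          case True
          then show ?thesis unfolding Q_def P_def using \<iota>A[OF True] \<kappa>\<iota>[OF True] by simp
        next
          case False
          then show ?thesis unfolding Q_def using e unfolding cube_def by simp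
        qed
      qed
    qed
    show "\<forall>e\<in>EA A. P (Q e) = e"
    proof
      fix e assume e: "e \<in> EA A"
      show "P (Q e) = e"
      proof (rule ext)
        fix i show "P (Q e) i = e i"
        proof (cases "i \<in> A")
          case True
          then show ?thesis unfolding Q_def P_def using \<kappa>k[OF True] \<iota>\<kappa>[OF True] by simp
        next
          case False
          then show ?thesis unfolding P_def using e unfolding PiE_dflt_def by simp
        qed
      qed
    qed
    show "P ` cube {-1,1} k \<subseteq> EA A"
    proof
      fix x assume "x \<in> P ` cube {-1,1} k"
      then obtain e where e: "e \<in> cube {-1,1} k" and x: "x = P e" by blast
      have "e (\<kappa> i) \<in> {-1,1}" if "i \<in> A" for i using e \<kappa>k[OF that] unfolding cube_def by blast
      then show "x \<in> EA A" unfolding x PiE_dflt_def P_def by simp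
    qed
    show "Q ` EA A \<subseteq> cube {-1,1} k"
    proof
      fix x assume "x \<in> Q ` EA A"
      then obtain e where e: "e \<in> EA A" and x: "x = Q e" by blast
      have "e (\<iota> j) \<in> {-1,1}" if "j < k" for j using e \<iota>A[OF that] unfolding PiE_dflt_def by blast
      then show "x \<in> cube {-1,1} k" unfolding x cube_def Q_def by simp
    qed
  qed
  have s2: "(\<Sum>e\<in>cube {-1,1} k. hsum f m n q (P e)) = (\<Sum>e\<in>EA A. hsum f m n q e)"
    by (rule sum.reindex_bij_betw[OF bijP])
  have "(\<Sum>i\<in>A. hsum f m n q (mei m i)) \<le> (C * real m) powr q / 2 ^ k * (\<Sum>e\<in>EA A. hsum f m n q e)"
    using tr unfolding s1 s2 card_pm1 by simp
  then have "2 ^ k * (\<Sum>i\<in>A. hsum f m n q (mei m i)) \<le> 2 ^ k * ((C * real m) powr q / 2 ^ k * (\<Sum>e\<in>EA A. hsum f m n q e))"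
    by (rule mult_left_mono) simp
  then show ?thesis unfolding k_def by simp
qed

lemma partition_cube:
  fixes F :: "(nat \<Rightarrow> int) \<Rightarrow> real"
  shows "(\<Sum>d\<in>cube {-1,0,1} n. F d) = (\<Sum>A\<in>Pow {..<n}. \<Sum>d\<in>EA A. F d)"
proof -
  let ?g = "\<lambda>d::nat \<Rightarrow> int. {i. d i \<noteq> 0}"
  have fin: "finite (cube {-1,0,1} n)" by (rule finite_cube) simp
  have sub: "?g ` cube {-1,0,1} n \<subseteq> Pow {..<n}"
  proof
    fix B assume "B \<in> ?g ` cube {-1,0,1} n"
    then obtain d where d: "d \<in> cube {-1,0,1} n" and B: "B = ?g d" by blast
    have "i < n" if "d i \<noteq> 0" for i
    proof (rule ccontr)
      assume "\<not> i < n"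
      hence "n \<le> i" by simp
      hence "d i = 0" using d unfolding cube_def by blast
      with that show False by simp
    qed
    then show "B \<in> Pow {..<n}" unfolding B by blast
  qed
  have eq: "{d \<in> cube {-1,0,1} n. ?g d = A} = EA A" if A: "A \<in> Pow {..<n}" for A
  proof (rule set_eqI)
    fix d
    show "d \<in> {d \<in> cube {-1,0,1} n. ?g d = A} \<longleftrightarrow> d \<in> EA A"
    proof
      assume "d \<in> {d \<in> cube {-1,0,1} n. ?g d = A}"
      then have d: "d \<in> cube {-1,0,1} n" and g: "?g d = A" by blast+
      have "d i \<in> {-1,1}" if "i \<in> A" for i
      proof -
        have "d i \<noteq> 0" using g that by blast
        moreover have "i < n" using A that by blast
        then have "d i \<in> {-1,0,1}" using d unfolding cube_def by blast
        ultimately show ?thesis by blast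
      qed
      moreover have "d i = 0" if "i \<notin> A" for i using g that by blast
      ultimately show "d \<in> EA A" unfolding PiE_dflt_def by blast
    next
      assume d: "d \<in> EA A"
      have d1: "d i \<in> {-1,1}" if "i \<in> A" for i using d that unfolding PiE_dflt_def by blast
      have d0: "d i = 0" if "i \<notin> A" for i using d that unfolding PiE_dflt_def by blast
      have "d \<in> cube {-1,0,1} n"
        unfolding cube_def
      proof (intro CollectI conjI allI impI)
        fix i assume "i < n"
        show "d i \<in> {-1,0,1}"
        proof (cases "i \<in> A")
          case True thus ?thesis using d1 by blast
        next
          case False thus ?thesis using d0 by simp
        qed
      next
        fix i assume "n \<le> i"
        have "i \<notin> A"
        proof
          assume "i \<in> A"
          with A have "i < n" by blast
          with \<open>n \<le> i\<close> show False by simp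
        qed
        then show "d i = 0" by (rule d0)
      qed
      moreover have "?g d = A"
      proof (rule set_eqI)
        fix i show "i \<in> ?g d \<longleftrightarrow> i \<in> A"
        proof (cases "i \<in> A")
          case True
          then have "d i \<in> {-1,1}" by (rule d1)
          then have "d i \<noteq> 0" by auto
          with True show ?thesis by simp
        next
          case False thus ?thesis using d0 by simp
        qed
      qed
      ultimately show "d \<in> {d \<in> cube {-1,0,1} n. ?g d = A}" by blast
    qed
  qed
  have "(\<Sum>d\<in>cube {-1,0,1} n. F d) = (\<Sum>A\<in>Pow {..<n}. \<Sum>d\<in>{x \<in> cube {-1,0,1} n. ?g x = A}. F d)"
    by (rule sum.group[OF fin _ sub, symmetric]) simp
  also have "\<dots> = (\<Sum>A\<in>Pow {..<n}. \<Sum>d\<in>EA A. F d)"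
    by (intro sum.cong refl) (simp only: eq)
  finally show ?thesis .
qed

lemma inj_insert_Pow: "x \<notin> F \<Longrightarrow> inj_on (insert x) (Pow F)"
  by (rule inj_onI) (metis Diff_insert_absorb PowD subsetD)

lemma sum_pow2_Pow:
  assumes "finite S"
  shows "(\<Sum>B\<in>Pow S. (2::real) ^ card B) = 3 ^ card S"
  using assms
proof (induction S rule: finite_induct)
  case empty
  then show ?case by simp
next
  case (insert x F)
  have disj: "Pow F \<inter> insert x ` Pow F = {}" using insert.hyps by blast
  have inj: "inj_on (insert x) (Pow F)"
    using insert.hyps(2) by (rule inj_insert_Pow)
  have c: "card (insert x B) = Suc (card B)" if "B \<in> Pow F" for B
  proof -
    have "finite B" using that insert.hyps(1) finite_subset by blast
    moreover have "x \<notin> B" using that insert.hyps(2) by blast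
    ultimately show ?thesis by simp
  qed
  have e1: "(\<Sum>B\<in>Pow (insert x F). (2::real) ^ card B)
      = (\<Sum>B\<in>Pow F. (2::real) ^ card B) + (\<Sum>B\<in>insert x ` Pow F. (2::real) ^ card B)"
    unfolding Pow_insert using insert.hyps(1) disj by (intro sum.union_disjoint) auto
  have e2: "(\<Sum>B\<in>insert x ` Pow F. (2::real) ^ card B) = (\<Sum>B\<in>Pow F. (2::real) ^ card (insert x B))"
    by (rule sum.reindex[OF inj, unfolded comp_def])
  have e3: "(\<Sum>B\<in>Pow F. (2::real) ^ card (insert x B)) = (\<Sum>B\<in>Pow F. 2 * (2::real) ^ card B)"
    by (intro sum.cong refl) (simp add: c)
  have e4: "(\<Sum>B\<in>Pow F. 2 * (2::real) ^ card B) = 2 * 3 ^ card F"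
    unfolding sum_distrib_left[symmetric] insert.IH ..
  have e5: "(3::real) ^ card (insert x F) = 3 * 3 ^ card F" using insert.hyps by simp
  show ?case unfolding e1 e2 e3 e4 e5 insert.IH by simp
qed

lemma sum_pow2_Pow_mem:
  assumes "finite S" "i \<in> S"
  shows "(\<Sum>B\<in>{B\<in>Pow S. i \<in> B}. (2::real) ^ card B) = 2 * 3 ^ (card S - 1)"
proof -
  have eqs: "{B\<in>Pow S. i \<in> B} = insert i ` Pow (S - {i})"
  proof (rule set_eqI, rule iffI)
    fix B assume "B \<in> {B\<in>Pow S. i \<in> B}"
    hence B: "B \<subseteq> S" "i \<in> B" by auto
    have "B - {i} \<in> Pow (S - {i})" using B(1) by blast
    then show "B \<in> insert i ` Pow (S - {i})" using insert_Diff[OF B(2)] by (metis image_eqI)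
  next
    fix B assume "B \<in> insert i ` Pow (S - {i})"
    then obtain C where C: "C \<subseteq> S - {i}" "B = insert i C" by blast
    thus "B \<in> {B\<in>Pow S. i \<in> B}" using assms(2) by blast
  qed
  have inj: "inj_on (insert i) (Pow (S - {i}))"
    by (rule inj_insert_Pow) simp
  have c: "card (insert i B) = Suc (card B)" if "B \<in> Pow (S - {i})" for B
  proof -
    have "finite B" using that assms(1) finite_subset by blast
    moreover have "i \<notin> B" using that by blast
    ultimately show ?thesis by simp
  qed
  have "(\<Sum>B\<in>{B\<in>Pow S. i \<in> B}. (2::real) ^ card B) = (\<Sum>B\<in>Pow (S - {i}). (2::real) ^ card (insert i B))"
    unfolding eqs by (rule sum.reindex[OF inj, unfolded comp_def])
  also have "\<dots> = (\<Sum>B\<in>Pow (S - {i}). 2 * (2::real) ^ card B)"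
    by (intro sum.cong refl) (simp add: c)
  also have "\<dots> = 2 * 3 ^ card (S - {i})"
    unfolding sum_distrib_left[symmetric] using assms(1) by (simp add: sum_pow2_Pow)
  also have "card (S - {i}) = card S - 1" using assms by simp
  finally show ?thesis .
qed

lemma first_core:
  fixes f :: "(nat \<Rightarrow> int) \<Rightarrow> 'a::metric_space"
  assumes V: "\<forall>k\<in>{1..n}. valid {-1,1} q m k C TYPE('a)"
    and q: "q \<ge> 1" and C: "C > 0" and m: "m \<ge> 1" and n: "n \<ge> 1"
  shows "lhs_sum q m n f \<le> 6 * (C * real m) powr q * rhs_avg {-1,0,1} q m n f"
proof -
  let ?K = "(C * real m) powr q"
  let ?h = "\<lambda>i. hsum f m n q (mei m i)"
  let ?H = "\<lambda>d. hsum f m n q d"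
  have K0: "?K \<ge> 0" by simp
  have slc: "2 ^ card A * (\<Sum>i\<in>A. ?h i) \<le> ?K * (\<Sum>e\<in>EA A. ?H e)" if "A \<in> Pow {..<n}" for A
    using slice[OF V q C m] that by blast
  have fin: "finite (Pow {..<n::nat})" by simp
  have r1: "(\<Sum>i\<in>A. ?h i) = (\<Sum>i<n. if i \<in> A then ?h i else 0)" if "A \<in> Pow {..<n}" for A
  proof -
    have "{i \<in> {..<n}. i \<in> A} = A" using that by blast
    then show ?thesis using sum.inter_filter[of "{..<n}" ?h "\<lambda>i. i \<in> A"] by simp
  qed
  have "(\<Sum>A\<in>Pow {..<n}. 2 ^ card A * (\<Sum>i\<in>A. ?h i))
      = (\<Sum>A\<in>Pow {..<n}. \<Sum>i<n. if i \<in> A then 2 ^ card A * ?h i else 0)"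
  proof (intro sum.cong refl)
    fix A assume A: "A \<in> Pow {..<n}"
    show "2 ^ card A * (\<Sum>i\<in>A. ?h i) = (\<Sum>i<n. if i \<in> A then 2 ^ card A * ?h i else 0)"
      unfolding r1[OF A] sum_distrib_left by (intro sum.cong refl) simp
  qed
  also have "\<dots> = (\<Sum>i<n. \<Sum>A\<in>Pow {..<n}. if i \<in> A then 2 ^ card A * ?h i else 0)"
    by (rule sum.swap)
  also have "\<dots> = (\<Sum>i<n. ?h i * (\<Sum>A\<in>{A\<in>Pow {..<n}. i \<in> A}. 2 ^ card A))"
  proof (intro sum.cong refl)
    fix i
    have "(\<Sum>A\<in>Pow {..<n}. if i \<in> A then 2 ^ card A * ?h i else 0)
        = (\<Sum>A\<in>{A\<in>Pow {..<n}. i \<in> A}. 2 ^ card A * ?h i)"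
      using sum.inter_filter[OF fin, of "\<lambda>A. 2 ^ card A * ?h i" "\<lambda>A. i \<in> A"] by simp
    also have "\<dots> = ?h i * (\<Sum>A\<in>{A\<in>Pow {..<n}. i \<in> A}. 2 ^ card A)"
      by (simp add: sum_distrib_left mult.commute)
    finally show "(\<Sum>A\<in>Pow {..<n}. if i \<in> A then 2 ^ card A * ?h i else 0)
        = ?h i * (\<Sum>A\<in>{A\<in>Pow {..<n}. i \<in> A}. 2 ^ card A)" .
  qed
  also have "\<dots> = (\<Sum>i<n. ?h i * (2 * 3 ^ (n - 1)))"
  proof (intro sum.cong refl)
    fix i assume i: "i \<in> {..<n}"
    have "(\<Sum>A\<in>{A\<in>Pow {..<n}. i \<in> A}. (2::real) ^ card A) = 2 * 3 ^ (card {..<n} - 1)"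
      by (rule sum_pow2_Pow_mem) (use i in simp_all)
    then show "?h i * (\<Sum>A\<in>{A\<in>Pow {..<n}. i \<in> A}. 2 ^ card A) = ?h i * (2 * 3 ^ (n - 1))"
      by simp
  qed
  also have "\<dots> = 2 * 3 ^ (n - 1) * lhs_sum q m n f"
    unfolding lhs_eq by (simp add: sum_distrib_left mult.commute)
  finally have e1: "(\<Sum>A\<in>Pow {..<n}. 2 ^ card A * (\<Sum>i\<in>A. ?h i)) = 2 * 3 ^ (n - 1) * lhs_sum q m n f" .
  have "(\<Sum>A\<in>Pow {..<n}. 2 ^ card A * (\<Sum>i\<in>A. ?h i)) \<le> (\<Sum>A\<in>Pow {..<n}. ?K * (\<Sum>e\<in>EA A. ?H e))"
    by (rule sum_mono) (rule slc)
  also have "\<dots> = ?K * (\<Sum>d\<in>cube {-1,0,1} n. ?H d)"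
    unfolding partition_cube sum_distrib_left ..
  also have "(\<Sum>d\<in>cube {-1,0,1} n. ?H d) = 3 ^ n * rhs_avg {-1,0,1} q m n f"
  proof -
    have c3: "card {-1, 0, 1::int} = 3" by simp
    show ?thesis unfolding rhs_eq c3 by simp
  qed
  finally have ineq: "2 * 3 ^ (n - 1) * lhs_sum q m n f \<le> ?K * (3 ^ n * rhs_avg {-1,0,1} q m n f)"
    unfolding e1 .
  have p3: "(3::real) ^ n = 3 * 3 ^ (n - 1)" using n by (cases n) simp_all
  define t where "t = (3::real) ^ (n - 1)"
  have t: "t > 0" unfolding t_def by simp
  have R0: "rhs_avg {-1,0,1} q m n f \<ge> 0" by (rule rhs_nonneg)
  have "2 * t * lhs_sum q m n f \<le> t * (3 * (?K * rhs_avg {-1,0,1} q m n f))"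
    using ineq unfolding p3 t_def[symmetric] by (simp add: algebra_simps)
  then have "2 * lhs_sum q m n f \<le> 3 * (?K * rhs_avg {-1,0,1} q m n f)"
    using t by (simp add: mult.assoc)
  moreover have "0 \<le> ?K * rhs_avg {-1,0,1} q m n f" using K0 R0 by simp
  ultimately show ?thesis by simp
qed

lemma first_valid:
  assumes V: "\<forall>k\<in>{1..n}. valid {-1,1} q m k C TYPE('a::metric_space)"
    and q: "q \<ge> 1" and C: "C > 0" and m: "m \<ge> 1" and n: "n \<ge> 1"
  shows "valid {-1,0,1} q m n (6 powr (1/q) * C) TYPE('a)"
proof (rule pow_valid)
  show "lhs_sum q m n f \<le> 6 * (C * real m) powr q * rhs_avg {-1,0,1} q m n f"
    for f :: "(nat \<Rightarrow> int) \<Rightarrow> 'a"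
    by (rule first_core[OF V q C m n])
  show "q \<ge> 1" by (rule q)
  show "0 < 6 powr (1/q) * C" using C by simp
  have "(6 powr (1/q) * C * real m) powr q = (6 powr (1/q)) powr q * (C * real m) powr q"
    by (simp add: powr_mult mult.assoc)
  also have "(6 powr (1/q)) powr q = 6" using q by (simp add: powr_powr)
  finally show "6 * (C * real m) powr q \<le> (6 powr (1/q) * C * real m) powr q" by simp
qed

definition dbl :: "(nat \<Rightarrow> int) \<Rightarrow> (nat \<Rightarrow> int)" where
  "dbl y = (\<lambda>i. 2 * y i)"

lemma hom2: "gadd (2*m) n x0 (dbl (gadd m n y e)) = gadd (2*m) n (gadd (2*m) n x0 (dbl y)) (dbl e)"
  unfolding gadd_assoc
proof (rule gadd_cong)
  fix i assume i: "i < n"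
  let ?b = "2 * int m"
  have eq: "2 * int (2 * m) = 2 * ?b" by simp
  have "dbl (gadd m n y e) i = 2 * ((y i + e i) mod ?b)"
    unfolding dbl_def gadd_def using i by simp
  also have "\<dots> = (2 * (y i + e i)) mod (2 * ?b)" by (rule mod_mult_mult1[symmetric])
  finally have "dbl (gadd m n y e) i mod (2 * int (2 * m)) = (2 * (y i + e i)) mod (2 * ?b)"
    unfolding eq by simp
  moreover have "vadd (dbl y) (dbl e) i = 2 * (y i + e i)" unfolding vadd_def dbl_def by simp
  ultimately show "dbl (gadd m n y e) i mod (2 * int (2 * m)) = vadd (dbl y) (dbl e) i mod (2 * int (2 * m))"
    unfolding eq by simp
qed

lemma dbl_mei: "dbl (mei m j) = mei (2*m) j"
  unfolding dbl_def mei_def by (rule ext) simp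

lemma Htri:
  fixes f :: "(nat \<Rightarrow> int) \<Rightarrow> 'a::metric_space"
  assumes m: "m \<ge> 1" and q: "q \<ge> 1"
  shows "hsum f m n q (vadd s t) \<le> 2 powr (q - 1) * (hsum f m n q s + hsum f m n q t)"
proof -
  have "hsum f m n q (vadd s t) = (\<Sum>x\<in>grid m n. dist (f (gadd m n (gadd m n x s) t)) (f x) powr q)"
    unfolding hsum_def gadd_assoc ..
  also have "\<dots> \<le> (\<Sum>x\<in>grid m n. 2 powr (q - 1) *
       (dist (f (gadd m n (gadd m n x s) t)) (f (gadd m n x s)) powr q + dist (f (gadd m n x s)) (f x) powr q))"
    by (intro sum_mono dist_powr_tri q)
  also have "\<dots> = 2 powr (q - 1) * ((\<Sum>x\<in>grid m n. dist (f (gadd m n (gadd m n x s) t)) (f (gadd m n x s)) powr q)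
        + hsum f m n q s)"
    unfolding hsum_def by (simp only: sum.distrib[symmetric] sum_distrib_left)
  also have "(\<Sum>x\<in>grid m n. dist (f (gadd m n (gadd m n x s) t)) (f (gadd m n x s)) powr q) = hsum f m n q t"
    unfolding hsum_def by (rule sum_translate[OF m, where F = "\<lambda>z. dist (f (gadd m n z t)) (f z) powr q"])
  finally show ?thesis by (simp add: add.commute)
qed

lemma finite_EA: "finite A \<Longrightarrow> finite (EA A)"
  by (intro finite_PiE_dflt) simp_all

lemma card_EA: "finite A \<Longrightarrow> card (EA A) = 2 ^ card A"
proof -
  assume "finite A"
  then have "card (EA A) = (\<Prod>i\<in>A. card {-1, 1::int})" by (intro card_PiE_dflt) simp_all
  then have "card (EA A) = (\<Prod>i\<in>A. 2)" unfolding card_pm1 .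
  then show ?thesis by simp
qed

lemma prod_EA:
  fixes F :: "(nat \<Rightarrow> int) \<Rightarrow> real"
  assumes fA: "finite A" and fB: "finite B" and disj: "A \<inter> B = {}"
  shows "(\<Sum>d\<in>EA A. \<Sum>e\<in>EA B. F (vadd d e)) = (\<Sum>s\<in>EA (A \<union> B). F s)"
proof -
  let ?h = "\<lambda>p. vadd (fst p) (snd p)"
  let ?r = "\<lambda>s. ((\<lambda>i. if i \<in> A then s i else 0), (\<lambda>i. if i \<in> B then s i else 0))"
  have bij: "bij_betw ?h (EA A \<times> EA B) (EA (A \<union> B))"
  proof (rule bij_betw_byWitness[where f' = ?r])
    show "\<forall>p\<in>EA A \<times> EA B. ?r (?h p) = p"
    proof
      fix p assume p: "p \<in> EA A \<times> EA B"
      obtain d e where pde: "p = (d, e)" by (cases p)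
      have d: "d \<in> EA A" and e: "e \<in> EA B" using p pde by auto
      have d0: "d i = 0" if "i \<notin> A" for i using d that unfolding PiE_dflt_def by blast
      have e0: "e i = 0" if "i \<notin> B" for i using e that unfolding PiE_dflt_def by blast
      have "(\<lambda>i. if i \<in> A then vadd d e i else 0) = d"
      proof (rule ext)
        fix i show "(if i \<in> A then vadd d e i else 0) = d i"
        proof (cases "i \<in> A")
          case True
          then have "i \<notin> B" using disj by blast
          then show ?thesis using True e0 unfolding vadd_def by simp
        next
          case False then show ?thesis using d0 by simp
        qed
      qed
      moreover have "(\<lambda>i. if i \<in> B then vadd d e i else 0) = e"
      proof (rule ext)
        fix i show "(if i \<in> B then vadd d e i else 0) = e i"
        proof (cases "i \<in> B")
          case True
          then have "i \<notin> A" using disj by blast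
          then show ?thesis using True d0 unfolding vadd_def by simp
        next
          case False then show ?thesis using e0 by simp
        qed
      qed
      ultimately show "?r (?h p) = p" unfolding pde fst_conv snd_conv prod.inject by blast
    qed
    show "\<forall>s\<in>EA (A \<union> B). ?h (?r s) = s"
    proof
      fix s assume s: "s \<in> EA (A \<union> B)"
      have s0: "s i = 0" if "i \<notin> A \<union> B" for i using s that unfolding PiE_dflt_def by blast
      show "?h (?r s) = s"
      proof (rule ext)
        fix i show "?h (?r s) i = s i"
        proof (cases "i \<in> A")
          case True
          then have "i \<notin> B" using disj by blast
          then show ?thesis using True unfolding vadd_def by simp
        next
          case False
          then show ?thesis using s0[of i] unfolding vadd_def by (cases "i \<in> B") simp_all
        qed
      qed
    qed
    show "?h ` (EA A \<times> EA B) \<subseteq> EA (A \<union> B)"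
    proof
      fix x assume "x \<in> ?h ` (EA A \<times> EA B)"
      then obtain d e where d: "d \<in> EA A" and e: "e \<in> EA B" and x: "x = vadd d e" by auto
      have d1: "d i \<in> {-1,1}" if "i \<in> A" for i using d that unfolding PiE_dflt_def by blast
      have e1: "e i \<in> {-1,1}" if "i \<in> B" for i using e that unfolding PiE_dflt_def by blast
      have d0: "d i = 0" if "i \<notin> A" for i using d that unfolding PiE_dflt_def by blast
      have e0: "e i = 0" if "i \<notin> B" for i using e that unfolding PiE_dflt_def by blast
      have "x i \<in> {-1,1}" if "i \<in> A \<union> B" for i
      proof (cases "i \<in> A")
        case True
        then have "i \<notin> B" using disj by blast
        then show ?thesis using True d1 e0 unfolding x vadd_def by simp
      next
        case False
        then have "i \<in> B" using that by blast
        then show ?thesis using False e1 d0 unfolding x vadd_def by simp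
      qed
      moreover have "x i = 0" if "i \<notin> A \<union> B" for i
        using that d0 e0 unfolding x vadd_def by simp
      ultimately show "x \<in> EA (A \<union> B)" unfolding PiE_dflt_def by blast
    qed
    show "?r ` EA (A \<union> B) \<subseteq> EA A \<times> EA B"
    proof
      fix x assume "x \<in> ?r ` EA (A \<union> B)"
      then obtain s where s: "s \<in> EA (A \<union> B)" and x: "x = ?r s" by blast
      have s1: "s i \<in> {-1,1}" if "i \<in> A \<union> B" for i using s that unfolding PiE_dflt_def by blast
      have "fst x \<in> EA A" unfolding x PiE_dflt_def using s1 by simp
      moreover have "snd x \<in> EA B" unfolding x PiE_dflt_def using s1 by simp
      ultimately show "x \<in> EA A \<times> EA B" by (simp add: mem_Times_iff)
    qed
  qed
  have "(\<Sum>d\<in>EA A. \<Sum>e\<in>EA B. F (vadd d e)) = (\<Sum>p\<in>EA A \<times> EA B. F (?h p))"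
    by (simp add: sum.cartesian_product case_prod_beta)
  also have "\<dots> = (\<Sum>s\<in>EA (A \<union> B). F s)"
    by (rule sum.reindex_bij_betw[OF bij])
  finally show ?thesis .
qed

lemma neg_EA:
  fixes F :: "(nat \<Rightarrow> int) \<Rightarrow> real"
  shows "(\<Sum>e\<in>EA B. F (\<lambda>i. - e i)) = (\<Sum>e\<in>EA B. F e)"
proof (rule sum.reindex_bij_betw)
  show "bij_betw (\<lambda>e i. - e i) (EA B) (EA B)"
  proof (rule bij_betw_byWitness[where f' = "\<lambda>e i. - e i"])
    show "\<forall>a\<in>EA B. (\<lambda>i. - (- a i)) = a" by simp
    show "\<forall>a\<in>EA B. (\<lambda>i. - (- a i)) = a" by simp
    show "(\<lambda>e i. - e i) ` EA B \<subseteq> EA B"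
    proof
      fix x assume "x \<in> (\<lambda>e i. - e i) ` EA B"
      then obtain e where e: "e \<in> EA B" and x: "x = (\<lambda>i. - e i)" by blast
      have "e i \<in> {-1,1}" if "i \<in> B" for i using e that unfolding PiE_dflt_def by blast
      moreover have "e i = 0" if "i \<notin> B" for i using e that unfolding PiE_dflt_def by blast
      ultimately show "x \<in> EA B" unfolding x PiE_dflt_def by auto
    qed
    then show "(\<lambda>e i. - e i) ` EA B \<subseteq> EA B" .
  qed
qed

lemma perA:
  fixes f :: "(nat \<Rightarrow> int) \<Rightarrow> 'a::metric_space"
  assumes M: "M \<ge> 1" and q: "q \<ge> 1" and A: "A \<subseteq> {..<n}"
  shows "2 ^ n * (\<Sum>d\<in>EA A. hsum f M n q (dbl d))
          \<le> 2 powr q * 2 ^ card A * (\<Sum>s\<in>cube {-1,1} n. hsum f M n q s)"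
proof -
  let ?H = "hsum f M n q"
  define B where "B = {..<n} - A"
  have fA: "finite A" using A finite_subset by blast
  have fB: "finite B" unfolding B_def by simp
  have disj: "A \<inter> B = {}" unfolding B_def by blast
  have un: "A \<union> B = {..<n}" unfolding B_def using A by blast
  have cB: "card B = n - card A" unfolding B_def using A by (simp add: card_Diff_subset fA)
  have cA: "card A \<le> n" using card_mono[OF _ A] by simp
  have p2: "(2::real) powr (q - 1) * 2 = 2 powr q" by (simp add: powr_diff)
  have pt: "card (EA B) * ?H (dbl d) \<le> 2 powr q * (\<Sum>e\<in>EA B. ?H (vadd d e))" for d
  proof -
    have one: "?H (dbl d) \<le> 2 powr (q - 1) * (?H (vadd d e) + ?H (vadd d (\<lambda>i. - e i)))" for e
    proof -
      have "vadd (vadd d e) (vadd d (\<lambda>i. - e i)) = dbl d"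
        unfolding vadd_def dbl_def by (rule ext) simp
      then show ?thesis using Htri[OF M q, of f n "vadd d e" "vadd d (\<lambda>i. - e i)"] by simp
    qed
    have "card (EA B) * ?H (dbl d) = (\<Sum>e\<in>EA B. ?H (dbl d))" by simp
    also have "\<dots> \<le> (\<Sum>e\<in>EA B. 2 powr (q - 1) * (?H (vadd d e) + ?H (vadd d (\<lambda>i. - e i))))"
      by (intro sum_mono one)
    also have "\<dots> = 2 powr (q - 1) * ((\<Sum>e\<in>EA B. ?H (vadd d e)) + (\<Sum>e\<in>EA B. ?H (vadd d (\<lambda>i. - e i))))"
      by (simp only: sum.distrib[symmetric] sum_distrib_left)
    also have "(\<Sum>e\<in>EA B. ?H (vadd d (\<lambda>i. - e i))) = (\<Sum>e\<in>EA B. ?H (vadd d e))"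
      by (rule neg_EA[where F = "\<lambda>e. ?H (vadd d e)"])
    also have "2 powr (q - 1) * ((\<Sum>e\<in>EA B. ?H (vadd d e)) + (\<Sum>e\<in>EA B. ?H (vadd d e)))
        = 2 powr q * (\<Sum>e\<in>EA B. ?H (vadd d e))"
      unfolding p2[symmetric] by simp
    finally show ?thesis .
  qed
  have "card (EA B) * (\<Sum>d\<in>EA A. ?H (dbl d)) = (\<Sum>d\<in>EA A. card (EA B) * ?H (dbl d))"
    by (simp add: sum_distrib_left)
  also have "\<dots> \<le> (\<Sum>d\<in>EA A. 2 powr q * (\<Sum>e\<in>EA B. ?H (vadd d e)))"
    by (intro sum_mono pt)
  also have "\<dots> = 2 powr q * (\<Sum>d\<in>EA A. \<Sum>e\<in>EA B. ?H (vadd d e))"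
    by (simp add: sum_distrib_left)
  also have "(\<Sum>d\<in>EA A. \<Sum>e\<in>EA B. ?H (vadd d e)) = (\<Sum>s\<in>EA (A \<union> B). ?H s)"
    by (rule prod_EA[OF fA fB disj])
  also have "EA (A \<union> B) = cube {-1,1} n" unfolding un cube_PiE ..
  finally have ineq: "real (card (EA B)) * (\<Sum>d\<in>EA A. ?H (dbl d)) \<le> 2 powr q * (\<Sum>s\<in>cube {-1,1} n. ?H s)" .
  have e2: "(2::real) ^ n = 2 ^ card A * 2 ^ card B"
    unfolding cB power_add[symmetric] using cA by simp
  have "2 ^ n * (\<Sum>d\<in>EA A. ?H (dbl d)) = 2 ^ card A * (real (card (EA B)) * (\<Sum>d\<in>EA A. ?H (dbl d)))"
    unfolding e2 card_EA[OF fB] by simp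
  also have "\<dots> \<le> 2 ^ card A * (2 powr q * (\<Sum>s\<in>cube {-1,1} n. ?H s))"
    by (rule mult_left_mono[OF ineq]) simp
  finally show ?thesis by (simp add: algebra_simps)
qed

lemma second_core:
  fixes f :: "(nat \<Rightarrow> int) \<Rightarrow> 'a::metric_space"
  assumes V: "valid {-1,0,1} q m n C TYPE('a)" and q: "q \<ge> 1" and C: "C > 0" and m: "m \<ge> 1"
  shows "lhs_sum q (2*m) n f \<le> (C * real (2*m)) powr q * rhs_avg {-1,1} q (2*m) n f"
proof -
  let ?H = "hsum f (2*m) n q"
  let ?K = "(C * real m) powr q"
  let ?S = "\<Sum>s\<in>cube {-1,1} n. ?H s"
  let ?X = "\<Sum>d\<in>cube {-1,0,1} n. ?H (dbl d)"
  have m2: "2 * m \<ge> 1" using m by simp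
  have tr: "(\<Sum>j<n. ?H (dbl (mei m j))) \<le> ?K / real (card {-1,0,1::int}) ^ n * ?X"
    by (rule transfer[where T = dbl and m' = "2*m" and k = n, OF V q C m m2 hom2])
  have c3: "card {-1, 0, 1::int} = 3" by simp
  have L: "lhs_sum q (2*m) n f = (\<Sum>j<n. ?H (dbl (mei m j)))"
    unfolding lhs_eq dbl_mei ..
  have tr2: "3 ^ n * lhs_sum q (2*m) n f \<le> ?K * ?X"
  proof -
    have "lhs_sum q (2*m) n f \<le> ?K / 3 ^ n * ?X" using tr unfolding L c3 by simp
    then have "3 ^ n * lhs_sum q (2*m) n f \<le> 3 ^ n * (?K / 3 ^ n * ?X)"
      by (rule mult_left_mono) simp
    then show ?thesis by simp
  qed
  have "2 ^ n * ?X = (\<Sum>A\<in>Pow {..<n}. 2 ^ n * (\<Sum>d\<in>EA A. ?H (dbl d)))"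
    unfolding partition_cube[where F = "\<lambda>d. ?H (dbl d)"] sum_distrib_left ..
  also have "\<dots> \<le> (\<Sum>A\<in>Pow {..<n}. 2 powr q * ?S * 2 ^ card A)"
  proof (rule sum_mono)
    fix A assume "A \<in> Pow {..<n}"
    then have "A \<subseteq> {..<n}" by blast
    from perA[OF m2 q this, of f]
    show "2 ^ n * (\<Sum>d\<in>EA A. ?H (dbl d)) \<le> 2 powr q * ?S * 2 ^ card A"
      by (simp add: algebra_simps)
  qed
  also have "\<dots> = 2 powr q * ?S * 3 ^ n"
    unfolding sum_distrib_left[symmetric] using sum_pow2_Pow[of "{..<n}"] by simp
  finally have X: "2 ^ n * ?X \<le> 2 powr q * ?S * 3 ^ n" .
  have K0: "?K \<ge> 0" by simp
  have "2 ^ n * (3 ^ n * lhs_sum q (2*m) n f) \<le> 2 ^ n * (?K * ?X)"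
    by (rule mult_left_mono[OF tr2]) simp
  also have "\<dots> = ?K * (2 ^ n * ?X)" by (simp add: algebra_simps)
  also have "\<dots> \<le> ?K * (2 powr q * ?S * 3 ^ n)" by (rule mult_left_mono[OF X K0])
  finally have "3 ^ n * (2 ^ n * lhs_sum q (2*m) n f) \<le> 3 ^ n * (?K * 2 powr q * ?S)"
    by (simp add: algebra_simps)
  then have main: "2 ^ n * lhs_sum q (2*m) n f \<le> ?K * 2 powr q * ?S"
    by (simp only: mult_le_cancel_left_pos zero_less_power zero_less_numeral)
  have Kc: "(C * real (2*m)) powr q = 2 powr q * ?K"
  proof -
    have "C * real (2*m) = 2 * (C * real m)" by simp
    then show ?thesis using C by (simp add: powr_mult)
  qed
  have R: "rhs_avg {-1,1} q (2*m) n f = ?S / 2 ^ n"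
    unfolding rhs_eq card_pm1 by simp
  have "lhs_sum q (2*m) n f \<le> ?K * 2 powr q * ?S / 2 ^ n"
    using main by (simp add: field_simps)
  also have "\<dots> = (C * real (2*m)) powr q * rhs_avg {-1,1} q (2*m) n f"
    unfolding Kc R by simp
  finally show ?thesis .
qed

lemma second_valid:
  assumes V: "valid {-1,0,1} q m n C TYPE('a::metric_space)" and q: "q \<ge> 1" and C: "C > 0" and m: "m \<ge> 1"
  shows "valid {-1,1} q (2*m) n C TYPE('a)"
proof (rule pow_valid)
  show "lhs_sum q (2*m) n f \<le> (C * real (2*m)) powr q * rhs_avg {-1,1} q (2*m) n f"
    for f :: "(nat \<Rightarrow> int) \<Rightarrow> 'a"
    by (rule second_core[OF V q C m])
qed (use q C in simp_all)

lemma Cconst_nonneg: "Cconst S q m n X \<ge> 0"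
  unfolding Cconst_def by (rule Inf_greatest) auto

lemma Cconst_le:
  assumes "valid S q m n C X" "C > 0"
  shows "Cconst S q m n X \<le> ereal C"
  unfolding Cconst_valid by (rule Inf_lower) (use assms in blast)

lemma valid_below:
  assumes "Cconst S q m n TYPE('a::metric_space) < ereal t"
  shows "valid S q m n t TYPE('a)"
proof -
  obtain x where x: "x \<in> {ereal C | C. C > 0 \<and> valid S q m n C TYPE('a)}" and xt: "x < ereal t"
    using assms unfolding Cconst_valid Inf_less_iff by blast
  then obtain C where C: "x = ereal C" "C > 0" "valid S q m n C TYPE('a)" by blast
  have "C \<le> t" using xt C(1) by simp
  then show ?thesis using valid_mono C(3) by blast
qed

lemma ereal_le_2x: "(x::ereal) \<ge> 0 \<Longrightarrow> x \<le> 2 * x"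
  by (cases x) simp_all

theorem mainTheorem12:
  fixes q :: real and m n :: nat
  assumes "1 \<le> q" and "1 \<le> m" and "1 \<le> n"
  shows "Cconst {-1,0,1} q m n TYPE('a::metric_space)
           \<le> ereal (6 powr (1/q)) * Max ((\<lambda>k. Cconst {-1,1} q m k TYPE('a)) ` {1..n})
       \<and> Cconst {-1,1} q (2*m) n TYPE('a) \<le> 2 * Cconst {-1,0,1} q m n TYPE('a)"
proof
  have q: "q \<ge> 1" and m: "m \<ge> 1" and n: "n \<ge> 1" using assms by simp_all
  let ?Mx = "Max ((\<lambda>k. Cconst {-1,1} q m k TYPE('a)) ` {1..n})"
  let ?c = "6 powr (1/q) :: real"
  have c0: "?c > 0" by simp
  have ge: "Cconst {-1,1} q m k TYPE('a) \<le> ?Mx" if "k \<in> {1..n}" for k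
    by (rule Max_ge) (use that in simp_all)
  have one: "(1::nat) \<in> {1..n}" using n by simp
  have Mx0: "?Mx \<ge> 0" by (rule order_trans[OF Cconst_nonneg ge[OF one]])
  show "Cconst {-1,0,1} q m n TYPE('a) \<le> ereal ?c * ?Mx"
  proof (cases "?Mx = \<infinity>")
    case True
    then show ?thesis using c0 by simp
  next
    case False
    then obtain M where M: "?Mx = ereal M" using Mx0 by (cases ?Mx) simp_all
    have M0: "M \<ge> 0" using Mx0 M by simp
    have key: "Cconst {-1,0,1} q m n TYPE('a) \<le> ereal (?c * (M + e))" if e: "e > 0" for e
    proof -
      have t0: "M + e > 0" using M0 e by simp
      have V: "\<forall>k\<in>{1..n}. valid {-1,1} q m k (M + e) TYPE('a)"
      proof
        fix k assume k: "k \<in> {1..n}"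
        have "Cconst {-1,1} q m k TYPE('a) \<le> ereal M" using ge[OF k] M by simp
        also have "ereal M < ereal (M + e)" using e by simp
        finally have "Cconst {-1,1} q m k TYPE('a) < ereal (M + e)" .
        then show "valid {-1,1} q m k (M + e) TYPE('a)" by (rule valid_below)
      qed
      have "valid {-1,0,1} q m n (?c * (M + e)) TYPE('a)"
        by (rule first_valid[OF V q t0 m n])
      then show ?thesis by (rule Cconst_le) (use t0 in simp)
    qed
    show ?thesis unfolding M
    proof (rule ereal_le_epsilon2)
      fix e :: real assume e: "e > 0"
      have "Cconst {-1,0,1} q m n TYPE('a) \<le> ereal (?c * (M + e / ?c))"
        using key[of "e / ?c"] e c0 by simp
      also have "?c * (M + e / ?c) = ?c * M + e" using c0 by (simp add: field_simps)
      finally show "Cconst {-1,0,1} q m n TYPE('a) \<le> ereal ?c * ereal M + ereal e" by simp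
    qed
  qed
next
  have q: "q \<ge> 1" and m: "m \<ge> 1" using assms by simp_all
  have sub: "{ereal C | C. C > 0 \<and> valid {-1,0,1} q m n C TYPE('a)}
      \<subseteq> {ereal C | C. C > 0 \<and> valid {-1,1} q (2*m) n C TYPE('a)}"
    using second_valid[OF _ q _ m] by blast
  have "Cconst {-1,1} q (2*m) n TYPE('a) \<le> Cconst {-1,0,1} q m n TYPE('a)"
    unfolding Cconst_valid by (rule Inf_superset_mono[OF sub])
  also have "\<dots> \<le> 2 * Cconst {-1,0,1} q m n TYPE('a)"
    by (rule ereal_le_2x[OF Cconst_nonneg])
  finally show "Cconst {-1,1} q (2*m) n TYPE('a) \<le> 2 * Cconst {-1,0,1} q m n TYPE('a)" .
qed

end
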